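(* Let $n\ge3$ and let $A_1,\dots,A_n$ be events in a probability space. Then \[ \Pr\Big(\bigcup_{i=1}^n A_i\Big) \ge \frac{1}{n-2}\Big(\sum_{i=1}^n\Pr(A_i) - \frac{2n-3}{\binom n2}\sum_{1\le i<j\le n}\Pr(A_i\cap A_j) + \frac{3}{\binom n2}\sum_{1\le i<j<k\le n}\Pr(A_i\cap A_j\cap A_k)\Big). \] *)

theory Defs
  imports "HOL-Probability.Probability"
begin

end

theory Submission
  imports Defs
begin

lemma poly_nat: "(p::nat) + d \<ge> 2 \<Longrightarrow> p^2+p*d+d^2+2*d+2*p \<le> p^3+3*p^2*d+2*p*d^2+d^3"
proof -
  assume h: "p + d \<ge> 2"
  consider "p \<ge> 2" | "d \<ge> 2" | "p = 1 \<and> d = 1" using h by linarith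
  then show ?thesis
  proof cases
    case 1
    then obtain q where "p = q + 2" by (metis add.commute le_iff_add)
    then show ?thesis by (simp add: algebra_simps power2_eq_square power3_eq_cube)
  next
    case 2
    then obtain q where "d = q + 2" by (metis add.commute le_iff_add)
    then show ?thesis by (simp add: algebra_simps power2_eq_square power3_eq_cube)
  next
    case 3 then show ?thesis by simp
  qed
qed

lemma poly_real:
  fixes m n :: nat
  assumes "1 \<le> m" "m \<le> n" "3 \<le> n"
  shows "real m * real n * (real n - 1) - (2 * real n - 3) * real m * (real m - 1)
     + real m * (real m - 1) * (real m - 2) \<le> (real n - 2) * real n * (real n - 1)"
proof -
  obtain p where p: "m = 1 + p" using assms(1) by (metis le_iff_add)
  obtain d where d: "n = m + d" using assms(2) by (metis le_iff_add)
  have "p + d \<ge> 2" using assms p d by linarith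
  from poly_nat[OF this] have "real (p^2+p*d+d^2+2*d+2*p) \<le> real (p^3+3*p^2*d+2*p*d^2+d^3)"
    by linarith
  then show ?thesis unfolding p d
    by (simp add: algebra_simps power2_eq_square power3_eq_cube)
qed

lemma comb:
  fixes a :: "nat \<Rightarrow> real"
  assumes "\<And>i. a i = 0 \<or> a i = 1"
  shows "2 * (\<Sum>j=1..n. \<Sum>i=1..<j. a i * a j) = (\<Sum>i=1..n. a i) * ((\<Sum>i=1..n. a i) - 1)
    \<and> 6 * (\<Sum>k=1..n. \<Sum>j=1..<k. \<Sum>i=1..<j. a i * a j * a k)
        = (\<Sum>i=1..n. a i) * ((\<Sum>i=1..n. a i) - 1) * ((\<Sum>i=1..n. a i) - 2)
    \<and> (\<exists>m\<le>n. (\<Sum>i=1..n. a i) = real m)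
    \<and> ((\<Sum>i=1..n. a i) = 0 \<longleftrightarrow> (\<forall>i\<in>{1..n}. a i = 0))"
proof (induction n)
  case 0
  then show ?case by simp
next
  case (Suc n)
  define S where "S = (\<Sum>i=1..n. a i)"
  define P where "P = (\<Sum>j=1..n. \<Sum>i=1..<j. a i * a j)"
  define T where "T = (\<Sum>k=1..n. \<Sum>j=1..<k. \<Sum>i=1..<j. a i * a j * a k)"
  have S1: "(\<Sum>i=1..Suc n. a i) = S + a (Suc n)" by (simp add: S_def)
  have P1: "(\<Sum>j=1..Suc n. \<Sum>i=1..<j. a i * a j) = P + S * a (Suc n)"
    by (simp add: P_def S_def atLeastLessThanSuc_atLeastAtMost sum_distrib_right)
  have T1: "(\<Sum>k=1..Suc n. \<Sum>j=1..<k. \<Sum>i=1..<j. a i * a j * a k) = T + P * a (Suc n)"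
    by (simp add: P_def T_def atLeastLessThanSuc_atLeastAtMost sum_distrib_right)
  have IH: "2 * P = S * (S - 1)" "6 * T = S * (S - 1) * (S - 2)" "\<exists>m\<le>n. S = real m"
     "S = 0 \<longleftrightarrow> (\<forall>i\<in>{1..n}. a i = 0)"
    using Suc.IH unfolding S_def P_def T_def by auto
  obtain m where m: "m \<le> n" "S = real m" using IH(3) by blast
  have Sge: "S \<ge> 0" using m by simp
  show ?case unfolding S1 P1 T1
  proof (cases "a (Suc n) = 0")
    case True
    then show "2 * (P + S * a (Suc n)) = (S + a (Suc n)) * (S + a (Suc n) - 1) \<and>
    6 * (T + P * a (Suc n)) = (S + a (Suc n)) * (S + a (Suc n) - 1) * (S + a (Suc n) - 2) \<and>
    (\<exists>m\<le>Suc n. S + a (Suc n) = real m) \<and> (S + a (Suc n) = 0) = (\<forall>i\<in>{1..Suc n}. a i = 0)"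
      using IH m by (auto simp: le_Suc_eq)
  next
    case False
    then have a1: "a (Suc n) = 1" using assms by blast
    have "6 * (T + P) = (S + 1) * S * (S - 1)" using IH(1,2) by (simp add: algebra_simps)
    moreover have "2 * (P + S) = (S + 1) * S" using IH(1) by (simp add: algebra_simps)
    moreover have "\<exists>m\<le>Suc n. S + 1 = real m" using m by (intro exI[of _ "Suc m"]) auto
    moreover have "S + 1 \<noteq> 0" using Sge by simp
    moreover have "\<not>(\<forall>i\<in>{1..Suc n}. a i = 0)" using a1 by force
    ultimately show "2 * (P + S * a (Suc n)) = (S + a (Suc n)) * (S + a (Suc n) - 1) \<and>
    6 * (T + P * a (Suc n)) = (S + a (Suc n)) * (S + a (Suc n) - 1) * (S + a (Suc n) - 2) \<and>
    (\<exists>m\<le>Suc n. S + a (Suc n) = real m) \<and> (S + a (Suc n) = 0) = (\<forall>i\<in>{1..Suc n}. a i = 0)"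
      unfolding a1 by (auto simp: algebra_simps)
  qed
qed

lemma pair_sum: "(\<Sum>(i, j)\<in>{(i, j). 1 \<le> i \<and> i < j \<and> j \<le> (n::nat)}. g i j) = (\<Sum>j=1..n. \<Sum>i=1..<j. (g i j :: real))"
proof -
  have "(\<Sum>j=1..n. \<Sum>i=1..<j. g i j) = (\<Sum>(j,i)\<in>Sigma {1..n} (\<lambda>j. {1..<j}). g i j)"
    by (subst sum.Sigma) auto
  also have "\<dots> = (\<Sum>(i, j)\<in>{(i, j). 1 \<le> i \<and> i < j \<and> j \<le> n}. g i j)"
    by (rule sum.reindex_bij_witness[of _ "\<lambda>(i,j). (j,i)" "\<lambda>(j,i). (i,j)"]) auto
  finally show ?thesis by simp
qed

lemma triple_sum: "(\<Sum>(i, j, k)\<in>{(i, j, k). 1 \<le> i \<and> i < j \<and> j < k \<and> k \<le> (n::nat)}. g i j k)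
   = (\<Sum>k=1..n. \<Sum>j=1..<k. \<Sum>i=1..<j. (g i j k :: real))"
proof -
  have "(\<Sum>k=1..n. \<Sum>j=1..<k. \<Sum>i=1..<j. g i j k) = (\<Sum>k=1..n. \<Sum>(j,i)\<in>Sigma {1..<k} (\<lambda>j. {1..<j}). g i j k)"
    by (intro sum.cong refl, subst sum.Sigma) auto
  also have "\<dots> = (\<Sum>(k,j,i)\<in>Sigma {1..n} (\<lambda>k. Sigma {1..<k} (\<lambda>j. {1..<j})). g i j k)"
    by (subst sum.Sigma) auto
  also have "\<dots> = (\<Sum>(i, j, k)\<in>{(i, j, k). 1 \<le> i \<and> i < j \<and> j < k \<and> k \<le> n}. g i j k)"
    by (rule sum.reindex_bij_witness[of _ "\<lambda>(i,j,k). (k,j,i)" "\<lambda>(k,j,i). (i,j,k)"]) auto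
  finally show ?thesis by simp
qed

lemma int_ind_sum:
  assumes "prob_space M" "finite P" "\<And>p. p \<in> P \<Longrightarrow> B p \<in> sets M"
  shows "integral\<^sup>L M (\<lambda>x. \<Sum>p\<in>P. indicator (B p) x) = (\<Sum>p\<in>P. measure M (B p))"
    "integrable M (\<lambda>x. \<Sum>p\<in>P. indicator (B p) x :: real)"
proof -
  interpret prob_space M by fact
  have int: "integrable M (indicator (B p) :: _ \<Rightarrow> real)" if "p \<in> P" for p
    using assms(3)[OF that] by (intro integrable_real_indicator) (auto simp: less_top[symmetric])
  show "integral\<^sup>L M (\<lambda>x. \<Sum>p\<in>P. indicator (B p) x) = (\<Sum>p\<in>P. measure M (B p))"
  proof -
    have "integral\<^sup>L M (\<lambda>x. \<Sum>p\<in>P. indicator (B p) x :: real) = (\<Sum>p\<in>P. integral\<^sup>L M (indicator (B p)))"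
      by (rule Bochner_Integration.integral_sum) (use int in auto)
    also have "\<dots> = (\<Sum>p\<in>P. measure M (B p))"
      using assms(3) sets.sets_into_space by (auto intro!: sum.cong simp: Int_absorb2)
    finally show ?thesis .
  qed
  show "integrable M (\<lambda>x. \<Sum>p\<in>P. indicator (B p) x :: real)"
    using int by auto
qed

theorem corollary4:
  fixes M :: "'a measure" and A :: "nat \<Rightarrow> 'a set" and n :: nat
  assumes "prob_space M"
    and "n \<ge> 3"
    and "\<And>i. i \<in> {1..n} \<Longrightarrow> A i \<in> sets M"
  shows "measure M (\<Union>i\<in>{1..n}. A i) \<ge>
    (1 / (real n - 2)) *
      ((\<Sum>i\<in>{1..n}. measure M (A i))
       - ((2 * real n - 3) / real (n choose 2)) *
           (\<Sum>(i, j)\<in>{(i, j). 1 \<le> i \<and> i < j \<and> j \<le> n}. measure M (A i \<inter> A j))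
       + (3 / real (n choose 2)) *
           (\<Sum>(i, j, k)\<in>{(i, j, k). 1 \<le> i \<and> i < j \<and> j < k \<and> k \<le> n}.
              measure M (A i \<inter> A j \<inter> A k)))"
proof -
  interpret prob_space M by fact
  define I where "I = {1..n}"
  define P where "P = {(i, j). 1 \<le> i \<and> i < j \<and> j \<le> n}"
  define T where "T = {(i, j, k). 1 \<le> i \<and> i < j \<and> j < k \<and> k \<le> n}"
  define B2 where "B2 = (\<lambda>(i,j). A i \<inter> A j)"
  define B3 where "B3 = (\<lambda>(i,j,k). A i \<inter> A j \<inter> A k)"
  define c2 where "c2 = (2 * real n - 3) / real (n choose 2)"
  define c3 where "c3 = 3 / real (n choose 2)"
  have finP: "finite P"
    by (rule finite_subset[of _ "{1..n} \<times> {1..n}"]) (auto simp: P_def)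
  have finT: "finite T"
    by (rule finite_subset[of _ "{1..n} \<times> {1..n} \<times> {1..n}"]) (auto simp: T_def)
  have sB2: "B2 p \<in> sets M" if "p \<in> P" for p
    using that assms(3) by (auto simp: P_def B2_def)
  have sB3: "B3 p \<in> sets M" if "p \<in> T" for p
    using that assms(3) by (auto simp: T_def B3_def)
  have sI: "A i \<in> sets M" if "i \<in> I" for i using that assms(3) by (auto simp: I_def)
  note e1 = int_ind_sum[OF assms(1) _ sI, of I]
  note e2 = int_ind_sum[OF assms(1) finP sB2]
  note e3 = int_ind_sum[OF assms(1) finT sB3]
  define F where "F = (\<lambda>x. (1 / (real n - 2)) * ((\<Sum>i\<in>I. indicator (A i) x)
     - c2 * (\<Sum>p\<in>P. indicator (B2 p) x) + c3 * (\<Sum>p\<in>T. indicator (B3 p) x)) :: real)"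
  have intF: "integrable M F" unfolding F_def using e1(2) e2(2) e3(2) by (auto simp: I_def)
  have "integral\<^sup>L M F = (1 / (real n - 2)) * ((\<Sum>i\<in>I. measure M (A i))
     - c2 * (\<Sum>p\<in>P. measure M (B2 p)) + c3 * (\<Sum>p\<in>T. measure M (B3 p)))"
    unfolding F_def using e1 e2 e3 by (simp add: I_def)
  also have "\<dots> = (1 / (real n - 2)) *
      ((\<Sum>i\<in>{1..n}. measure M (A i))
       - ((2 * real n - 3) / real (n choose 2)) *
           (\<Sum>(i, j)\<in>{(i, j). 1 \<le> i \<and> i < j \<and> j \<le> n}. measure M (A i \<inter> A j))
       + (3 / real (n choose 2)) *
           (\<Sum>(i, j, k)\<in>{(i, j, k). 1 \<le> i \<and> i < j \<and> j < k \<and> k \<le> n}.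
              measure M (A i \<inter> A j \<inter> A k)))" (is "_ = ?R")
    unfolding I_def P_def T_def c2_def c3_def B2_def B3_def
    by (simp add: case_prod_beta)
  finally have RHS: "integral\<^sup>L M F = ?R" .
  define U where "U = (\<Union>i\<in>{1..n}. A i)"
  have sU: "U \<in> sets M" using assms(3) by (auto simp: U_def)
  have intU: "integrable M (indicator U :: _ \<Rightarrow> real)" using sU by (intro integrable_real_indicator) (auto simp: less_top[symmetric])
  have LHS: "integral\<^sup>L M (indicator U) = measure M U"
    using sU sets.sets_into_space by (simp add: Int_absorb2)
  have N: "real (n choose 2) = real n * (real n - 1) / 2"
  proof -
    have "even (n * (n - 1))" by (cases "even n") auto
    then have "real (n * (n - 1) div 2) = real (n * (n - 1)) / 2"
      by (simp add: real_of_nat_div)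
    then show ?thesis using assms(2) by (simp add: choose_two of_nat_diff)
  qed
  have n3: "real n \<ge> 3" using assms(2) by simp
  have pw: "F x \<le> indicator U x" for x
  proof -
    define a where "a = (\<lambda>i. indicator (A i) x :: real)"
    have a01: "a i = 0 \<or> a i = 1" for i by (simp add: a_def indicator_def)
    define S where "S = (\<Sum>i=1..n. a i)"
    define Pp where "Pp = (\<Sum>j=1..n. \<Sum>i=1..<j. a i * a j)"
    define Tt where "Tt = (\<Sum>k=1..n. \<Sum>j=1..<k. \<Sum>i=1..<j. a i * a j * a k)"
    have c: "2 * Pp = S * (S - 1)" "6 * Tt = S * (S - 1) * (S - 2)" "\<exists>m\<le>n. S = real m"
      "S = 0 \<longleftrightarrow> (\<forall>i\<in>{1..n}. a i = 0)"
      using comb[of a n, OF a01] unfolding S_def Pp_def Tt_def by blast+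
    obtain m where m: "m \<le> n" "S = real m" using c(3) by blast
    have h2: "(\<Sum>p\<in>P. indicator (B2 p) x) = Pp"
    proof -
      have "(\<Sum>p\<in>P. indicator (B2 p) x) = (\<Sum>(i,j)\<in>P. a i * a j)"
        by (intro sum.cong refl) (auto simp: B2_def a_def indicator_inter_arith)
      then show ?thesis unfolding P_def Pp_def pair_sum .
    qed
    have h3: "(\<Sum>p\<in>T. indicator (B3 p) x) = Tt"
    proof -
      have "(\<Sum>p\<in>T. indicator (B3 p) x) = (\<Sum>(i,j,k)\<in>T. a i * a j * a k)"
        by (intro sum.cong refl) (auto simp: B3_def a_def indicator_inter_arith)
      then show ?thesis unfolding T_def Tt_def triple_sum .
    qed
    have h1: "(\<Sum>i\<in>I. indicator (A i) x) = S" by (simp add: I_def S_def a_def)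
    have Fx: "F x = (1 / (real n - 2)) * (S - c2 * Pp + c3 * Tt)"
      unfolding F_def h1 h2 h3 ..
    show ?thesis
    proof (cases "m = 0")
      case True
      then have "S = 0" "Pp = 0" "Tt = 0" using m c(1,2) by auto
      then show ?thesis using Fx by (simp add: indicator_def)
    next
      case False
      then have "S \<noteq> 0" using m by simp
      then obtain i where "i \<in> {1..n}" "a i \<noteq> 0" using c(4) by blast
      then have "x \<in> U" using a01[of i] by (auto simp: U_def a_def indicator_def split: if_splits)
      then have iU: "indicator U x = (1::real)" by simp
      have key: "real m * real n * (real n - 1) - (2 * real n - 3) * real m * (real m - 1)
        + real m * (real m - 1) * (real m - 2) \<le> (real n - 2) * real n * (real n - 1)"
        using poly_real[of m n] False m(1) assms(2) by simp
      have NN: "real n * (real n - 1) > 0" using n3 by simp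
      have "S - c2 * Pp + c3 * Tt = (real m * real n * (real n - 1) - (2 * real n - 3) * real m * (real m - 1)
        + real m * (real m - 1) * (real m - 2)) / (real n * (real n - 1))"
      proof -
        have Pp': "2 * Pp = S * (S - 1)" "6 * Tt = S * (S - 1) * (S - 2)" using c(1,2) by simp_all
        define D where "D = real n * (real n - 1)"
        have D0: "D \<noteq> 0" using NN D_def by linarith
        have "c2 = 2 * (2 * real n - 3) / D" unfolding c2_def N D_def by simp
        then have c2D: "c2 * D = 2 * (2 * real n - 3)" using D0 by simp
        have "c3 = 6 / D" unfolding c3_def N D_def by simp
        then have c3D: "c3 * D = 6" using D0 by simp
        have "(S - c2 * Pp + c3 * Tt) * D = S * D - (c2 * D) * Pp + (c3 * D) * Tt"
          by (simp add: algebra_simps)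
        also have "\<dots> = S * D - (2 * real n - 3) * (2 * Pp) + (6 * Tt)" unfolding c2D c3D by simp
        also have "\<dots> = real m * real n * (real n - 1) - (2 * real n - 3) * real m * (real m - 1)
        + real m * (real m - 1) * (real m - 2)" unfolding Pp' m(2) D_def by (simp add: algebra_simps)
        finally show ?thesis using D0 unfolding D_def by (simp add: eq_divide_eq)
      qed
      also have "\<dots> \<le> (real n - 2)" using key NN by (simp add: divide_le_eq mult.assoc)
      finally have "S - c2 * Pp + c3 * Tt \<le> real n - 2" .
      then have "F x \<le> 1" unfolding Fx using n3 by (simp add: divide_le_eq)
      then show ?thesis using iU by simp
    qed
  qed
  have "integral\<^sup>L M F \<le> integral\<^sup>L M (indicator U)"
    by (rule integral_mono[OF intF intU pw])
  then show ?thesis using RHS LHS by (simp add: U_def)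
qed

end
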